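(* Let $G$ be a graph obtained as follows: start with a connected bipartite graph with bipartition $X\sqcup Y$, $X=\{x_1,\dots,x_n\}$, $Y=\{y_1,\dots,y_m\}$, $n,m\ge 1$; attach $f_i\ge 1$ leaves (new vertices adjacent only to $x_i$) to each $x_i$; and attach $t_j\ge 0$ pendant triangles to each $y_j$ (two new vertices $u,v$ with edges $\{y_j,u\},\{y_j,v\},\{u,v\}$). Let $F=\sum_{i=1}^n f_i$ and $m_0=|\{j\in[m]: t_j=0\}|$. Then $G$ is pseudo-Gorenstein$^{*}$ if and only if $n+F+m_0$ is even.
   Context: For a finite simple graph $G$ on vertex set $[N]$, let $S=K[x_1,\dots,x_N]$ ($K$ a field) and $I(G)$ the edge ideal generated by $x_ix_j$, $\{i,j\}\in E(G)$. Let $\alpha(G)$ be the independence number (equal to $\dim S/I(G)$). Write the Hilbert series of $S/I(G)$ uniquely as $(h_0+\dots+h_st^s)/(1-t)^{\alpha(G)}$ with $h_s\ne 0$, and $\mathfrak a(G)=s-\alpha(G)$. $G$ is pseudo-Gorenstein$^{*}$ if $h_s=1$ and $\mathfrak a(G)=0$. *)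

theory Defs
  imports "HOL-Computational_Algebra.Computational_Algebra"
begin

definition simple_graph :: "'a set \<Rightarrow> 'a set set \<Rightarrow> bool" where
  "simple_graph V E \<longleftrightarrow> finite V \<and> (\<forall>e\<in>E. \<exists>u v. u \<noteq> v \<and> u \<in> V \<and> v \<in> V \<and> e = {u, v})"

definition connected_graph :: "'a set \<Rightarrow> 'a set set \<Rightarrow> bool" where
  "connected_graph V E \<longleftrightarrow> V \<noteq> {} \<and>
     (\<forall>u\<in>V. \<forall>v\<in>V. (\<lambda>x y. {x, y} \<in> E)\<^sup>*\<^sup>* u v)"

definition indep_set :: "'a set \<Rightarrow> 'a set set \<Rightarrow> 'a set \<Rightarrow> bool" where
  "indep_set V E A \<longleftrightarrow> A \<subseteq> V \<and> (\<forall>e\<in>E. \<not> e \<subseteq> A)"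

definition indep_number :: "'a set \<Rightarrow> 'a set set \<Rightarrow> nat" where
  "indep_number V E = Max (card ` {A. indep_set V E A})"

text \<open>Exponent vectors of the monomials of degree d in S = K[x_v : v in V] that are
  not in the edge ideal I(G), i.e. not divisible by any x_u x_v with {u,v} an edge
  (equivalently: the support is an independent set).  These monomials form a K-basis
  of the degree-d component of S/I(G).\<close>
definition std_monomials :: "'a set \<Rightarrow> 'a set set \<Rightarrow> nat \<Rightarrow> ('a \<Rightarrow> nat) set" where
  "std_monomials V E d = {a. (\<forall>v. v \<notin> V \<longrightarrow> a v = 0) \<and> (\<Sum>v\<in>V. a v) = d
                             \<and> indep_set V E {v. 0 < a v}}"

definition hilbert_fun :: "'a set \<Rightarrow> 'a set set \<Rightarrow> nat \<Rightarrow> nat" where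
  "hilbert_fun V E d = card (std_monomials V E d)"

definition hilbert_series :: "'a set \<Rightarrow> 'a set set \<Rightarrow> int fps" where
  "hilbert_series V E = Abs_fps (\<lambda>d. int (hilbert_fun V E d))"

definition h_poly :: "'a set \<Rightarrow> 'a set set \<Rightarrow> int poly" where
  "h_poly V E = (THE p. fps_of_poly p = hilbert_series V E * (1 - fps_X) ^ indep_number V E)"

definition a_invariant :: "'a set \<Rightarrow> 'a set set \<Rightarrow> int" where
  "a_invariant V E = int (degree (h_poly V E)) - int (indep_number V E)"

definition pseudo_gorenstein_star :: "'a set \<Rightarrow> 'a set set \<Rightarrow> bool" where
  "pseudo_gorenstein_star V E \<longleftrightarrow> lead_coeff (h_poly V E) = 1 \<and> a_invariant V E = 0"

text \<open>The construction: vertices x_i (i<n), y_j (j<m), leaves Lf i k (k < f i) at x_i,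
  and pendant triangles {y_j, TU j k, TV j k} (k < t j) at y_j.\<close>
datatype vert = Xv nat | Yv nat | Lf nat nat | TU nat nat | TV nat nat

definition base_verts :: "nat \<Rightarrow> nat \<Rightarrow> vert set" where
  "base_verts n m = Xv ` {..<n} \<union> Yv ` {..<m}"

definition base_edges :: "nat \<Rightarrow> nat \<Rightarrow> (nat \<Rightarrow> nat \<Rightarrow> bool) \<Rightarrow> vert set set" where
  "base_edges n m B = {{Xv i, Yv j} | i j. i < n \<and> j < m \<and> B i j}"

definition G_verts :: "nat \<Rightarrow> nat \<Rightarrow> (nat \<Rightarrow> nat) \<Rightarrow> (nat \<Rightarrow> nat) \<Rightarrow> vert set" where
  "G_verts n m f t = base_verts n m
     \<union> {Lf i k | i k. i < n \<and> k < f i}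
     \<union> {TU j k | j k. j < m \<and> k < t j}
     \<union> {TV j k | j k. j < m \<and> k < t j}"

definition G_edges :: "nat \<Rightarrow> nat \<Rightarrow> (nat \<Rightarrow> nat \<Rightarrow> bool) \<Rightarrow> (nat \<Rightarrow> nat) \<Rightarrow> (nat \<Rightarrow> nat)
                        \<Rightarrow> vert set set" where
  "G_edges n m B f t = base_edges n m B
     \<union> {{Xv i, Lf i k} | i k. i < n \<and> k < f i}
     \<union> {{Yv j, TU j k} | j k. j < m \<and> k < t j}
     \<union> {{Yv j, TV j k} | j k. j < m \<and> k < t j}
     \<union> {{TU j k, TV j k} | j k. j < m \<and> k < t j}"

end

theory Submission imports Defs begin

definition Pset :: "'a set \<Rightarrow> nat \<Rightarrow> ('a \<Rightarrow> nat) set" where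
  "Pset A d = {a. {x. 0 < a x} = A \<and> sum a A = d}"

lemma Pset_finite:
  assumes "finite A" shows "finite (Pset A d)"
proof -
  have "Pset A d \<subseteq> {f. \<forall>x. (x \<in> A \<longrightarrow> f x \<in> {..d}) \<and> (x \<notin> A \<longrightarrow> f x = 0)}"
  proof
    fix a assume "a \<in> Pset A d"
    hence s: "{x. 0 < a x} = A" "sum a A = d" by (simp_all add: Pset_def)
    have "a x \<le> d" if "x \<in> A" for x using member_le_sum[of x A a] that assms s by auto
    moreover have "a x = 0" if "x \<notin> A" for x using s that by auto
    ultimately show "a \<in> {f. \<forall>x. (x \<in> A \<longrightarrow> f x \<in> {..d}) \<and> (x \<notin> A \<longrightarrow> f x = 0)}" by auto
  qed
  thus ?thesis using finite_subset finite_set_of_finite_funs[OF assms, of "{..d}" 0] by blast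
qed

lemma Pset_empty: "Pset {} d = (if d = 0 then {\<lambda>_. 0} else {})"
proof -
  have "a \<in> Pset {} d \<longleftrightarrow> a = (\<lambda>_. 0) \<and> d = 0" for a
    unfolding Pset_def by (simp add: fun_eq_iff) 
  thus ?thesis by auto
qed

lemma Pset_0: assumes "finite A" "A \<noteq> {}" shows "Pset A 0 = {}"
proof -
  { fix a assume "a \<in> Pset A 0"
    hence s: "{x. 0 < a x} = A" "sum a A = 0" by (simp_all add: Pset_def)
    then have z: "\<forall>x\<in>A. a x = 0" using assms by simp
    obtain x where "x \<in> A" using assms(2) by blast
    hence "0 < a x" using s(1) by blast
    with z \<open>x \<in> A\<close> have False by simp }
  thus ?thesis by blast
qed

lemma Pset_Suc:
  assumes fin: "finite A" and v: "v \<notin> A"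
  shows "card (Pset (insert v A) (Suc d)) = card (Pset A d) + card (Pset (insert v A) d)"
proof -
  let ?B = "insert v A"
  define S1 where "S1 = {a\<in>Pset ?B (Suc d). a v = 1}"
  define S2 where "S2 = {a\<in>Pset ?B (Suc d). a v \<noteq> 1}"
  have fB: "finite ?B" using fin by simp
  have split: "Pset ?B (Suc d) = S1 \<union> S2" "S1 \<inter> S2 = {}" by (auto simp: S1_def S2_def)
  have f1: "finite S1" "finite S2" using Pset_finite[OF fB] by (auto simp: S1_def S2_def)
  have sumupd: "sum (a(v:=c)) A = sum a A" for a :: "'a \<Rightarrow> nat" and c
    using v by (intro sum.cong) auto
  have sumB: "sum a ?B = a v + sum a A" for a :: "'a \<Rightarrow> nat"
    using fin v by simp
  have b1: "bij_betw (\<lambda>a. a(v:=0)) S1 (Pset A d)"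
  proof (rule bij_betw_byWitness[where f' = "\<lambda>a. a(v:=1)"])
    show "\<forall>a\<in>S1. (a(v := 0))(v := 1) = a" by (auto simp: S1_def)
    show "\<forall>a\<in>Pset A d. (a(v := 1))(v := 0) = a" using v by (auto simp: Pset_def)
    show "(\<lambda>a. a(v := 0)) ` S1 \<subseteq> Pset A d"
    proof
      fix b assume "b \<in> (\<lambda>a. a(v := 0)) ` S1"
      then obtain a where a: "a \<in> S1" "b = a(v:=0)" by auto
      hence s: "{x. 0 < a x} = ?B" "sum a ?B = Suc d" "a v = 1" by (simp_all add: S1_def Pset_def)
      have "{x. 0 < b x} = A" using s(1) v a(2) by auto
      moreover have "sum b A = d" using s sumB[of a] sumupd[of a 0] a(2) by simp
      ultimately show "b \<in> Pset A d" by (simp add: Pset_def)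
    qed
    show "(\<lambda>a. a(v := 1)) ` Pset A d \<subseteq> S1"
    proof
      fix b assume "b \<in> (\<lambda>a. a(v := 1)) ` Pset A d"
      then obtain a where a: "a \<in> Pset A d" "b = a(v:=1)" by auto
      hence s: "{x. 0 < a x} = A" "sum a A = d" by (simp_all add: Pset_def)
      have "{x. 0 < b x} = ?B" using s(1) a(2) by auto
      moreover have "sum b ?B = Suc d" using s sumB[of b] sumupd[of a 1] a(2) by simp
      ultimately show "b \<in> S1" using a(2) by (simp add: Pset_def S1_def)
    qed
  qed
  have b2: "bij_betw (\<lambda>a. a(v:=a v - 1)) S2 (Pset ?B d)"
  proof (rule bij_betw_byWitness[where f' = "\<lambda>a. a(v:=Suc (a v))"])
    show "\<forall>a\<in>S2. (a(v := a v - 1))(v := Suc ((a(v := a v - 1)) v)) = a"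
    proof
      fix a assume "a \<in> S2"
      hence "0 < a v" by (auto simp: S2_def Pset_def)
      thus "(a(v := a v - 1))(v := Suc ((a(v := a v - 1)) v)) = a" by auto
    qed
    show "\<forall>a\<in>Pset ?B d. (a(v := Suc (a v)))(v := (a(v := Suc (a v))) v - 1) = a" by auto
    show "(\<lambda>a. a(v := a v - 1)) ` S2 \<subseteq> Pset ?B d"
    proof
      fix b assume "b \<in> (\<lambda>a. a(v := a v - 1)) ` S2"
      then obtain a where a: "a \<in> S2" "b = a(v:=a v - 1)" by auto
      hence s: "{x. 0 < a x} = ?B" "sum a ?B = Suc d" "a v \<noteq> 1" by (simp_all add: S2_def Pset_def)
      have "0 < a v" using s(1) by auto
      hence "a v \<ge> 2" using s(3) by linarith
      hence "{x. 0 < b x} = ?B" using s(1) a(2) by auto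
      moreover have "sum b ?B = d" using s sumB[of a] sumB[of b] sumupd[of a "a v - 1"] a(2) \<open>a v \<ge> 2\<close> by simp
      ultimately show "b \<in> Pset ?B d" by (simp add: Pset_def)
    qed
    show "(\<lambda>a. a(v := Suc (a v))) ` Pset ?B d \<subseteq> S2"
    proof
      fix b assume "b \<in> (\<lambda>a. a(v := Suc (a v))) ` Pset ?B d"
      then obtain a where a: "a \<in> Pset ?B d" "b = a(v:=Suc (a v))" by auto
      hence s: "{x. 0 < a x} = ?B" "sum a ?B = d" by (simp_all add: Pset_def)
      have "0 < a v" using s(1) by auto
      have "{x. 0 < b x} = ?B" using s(1) a(2) by auto
      moreover have "sum b ?B = Suc d" using s sumB[of a] sumB[of b] sumupd[of a "Suc (a v)"] a(2) by simp
      moreover have "b v \<noteq> 1" using a(2) \<open>0 < a v\<close> by simp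
      ultimately show "b \<in> S2" by (simp add: Pset_def S2_def)
    qed
  qed
  have "card (Pset ?B (Suc d)) = card S1 + card S2" using split f1 card_Un_disjoint by metis
  also have "\<dots> = card (Pset A d) + card (Pset ?B d)"
    using bij_betw_same_card[OF b1] bij_betw_same_card[OF b2] by simp
  finally show ?thesis .
qed

definition Qf :: "'a set \<Rightarrow> int fps" where
  "Qf A = Abs_fps (\<lambda>d. int (card (Pset A d)))"

lemma Qf_eq: "finite A \<Longrightarrow> Qf A * (1 - fps_X) ^ card A = fps_X ^ card A"
proof (induction A rule: finite_induct)
  case empty
  have "Qf {} = 1" by (rule fps_ext) (simp add: Qf_def Pset_empty)
  thus ?case by simp
next
  case (insert v A)
  let ?B = "insert v A"
  have "Qf ?B = fps_X * Qf A + fps_X * Qf ?B"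
  proof (rule fps_ext)
    fix n show "Qf ?B $ n = (fps_X * Qf A + fps_X * Qf ?B) $ n"
    proof (cases n)
      case 0 thus ?thesis using Pset_0[of ?B] insert by (simp add: Qf_def)
    next
      case (Suc d) thus ?thesis using Pset_Suc[OF insert(1,2)] by (simp add: Qf_def)
    qed
  qed
  hence e: "Qf ?B * (1 - fps_X) = fps_X * Qf A" by (simp add: algebra_simps)
  have "Qf ?B * (1 - fps_X) ^ card ?B = (Qf ?B * (1 - fps_X)) * (1 - fps_X) ^ card A"
    using insert by (simp add: algebra_simps)
  also have "\<dots> = (fps_X * Qf A) * (1 - fps_X) ^ card A" by (simp only: e)
  also have "\<dots> = fps_X * (Qf A * (1 - fps_X) ^ card A)" by (simp only: mult.assoc)
  also have "\<dots> = fps_X ^ card ?B" using insert by simp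
  finally show ?case .
qed


lemma indep_finite: "finite V \<Longrightarrow> finite {A. indep_set V E A}"
  by (rule finite_subset[of _ "Pow V"]) (auto simp: indep_set_def)

lemma std_eq:
  assumes "finite V"
  shows "std_monomials V E d = (\<Union>A\<in>{A. indep_set V E A}. Pset A d)"
proof
  show "std_monomials V E d \<subseteq> (\<Union>A\<in>{A. indep_set V E A}. Pset A d)"
  proof
    fix a assume "a \<in> std_monomials V E d"
    hence a: "\<forall>v. v \<notin> V \<longrightarrow> a v = 0" "sum a V = d" "indep_set V E {v. 0 < a v}"
      by (auto simp: std_monomials_def)
    have sub: "{v. 0 < a v} \<subseteq> V" using a(3) by (auto simp: indep_set_def)
    have "sum a {v. 0 < a v} = sum a V"
      by (rule sum.mono_neutral_left[OF assms sub]) auto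
    thus "a \<in> (\<Union>A\<in>{A. indep_set V E A}. Pset A d)" using a by (auto simp: Pset_def)
  qed
  show "(\<Union>A\<in>{A. indep_set V E A}. Pset A d) \<subseteq> std_monomials V E d"
  proof
    fix a assume "a \<in> (\<Union>A\<in>{A. indep_set V E A}. Pset A d)"
    then obtain A where A: "indep_set V E A" "{x. 0 < a x} = A" "sum a A = d"
      by (auto simp: Pset_def)
    have sub: "A \<subseteq> V" using A(1) by (auto simp: indep_set_def)
    have "sum a A = sum a V"
      by (rule sum.mono_neutral_left[OF assms sub]) (use A(2) in auto)
    moreover have "\<forall>v. v \<notin> V \<longrightarrow> a v = 0" using A(2) sub by auto
    ultimately show "a \<in> std_monomials V E d" using A by (auto simp: std_monomials_def)
  qed
qed

lemma hilbert_fun_eq: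
  assumes "finite V"
  shows "hilbert_fun V E d = (\<Sum>A\<in>{A. indep_set V E A}. card (Pset A d))"
proof -
  have fA: "\<forall>A\<in>{A. indep_set V E A}. finite (Pset A d)"
    using assms by (auto intro!: Pset_finite finite_subset[of _ V] simp: indep_set_def)
  have dj: "\<forall>A\<in>{A. indep_set V E A}. \<forall>B\<in>{A. indep_set V E A}. A \<noteq> B \<longrightarrow> Pset A d \<inter> Pset B d = {}"
    by (auto simp: Pset_def)
  show ?thesis unfolding hilbert_fun_def std_eq[OF assms]
    by (rule card_UN_disjoint[OF indep_finite[OF assms] fA dj])
qed

lemma HS_eq:
  assumes "finite V"
  shows "hilbert_series V E = (\<Sum>A\<in>{A. indep_set V E A}. Qf A)"
  by (rule fps_ext) (simp add: hilbert_series_def fps_sum_nth Qf_def hilbert_fun_eq[OF assms])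

lemma fps_lin: "fps_of_poly [:1, -1:] = (1 - fps_X :: int fps)"
  by (rule fps_ext) (auto simp: coeff_pCons split: nat.split)

lemma card_le_alpha:
  assumes "finite V" "indep_set V E A"
  shows "card A \<le> indep_number V E"
  unfolding indep_number_def using assms indep_finite[OF assms(1)] by (intro Max_ge) auto

definition hp :: "'a set \<Rightarrow> 'a set set \<Rightarrow> int poly" where
  "hp V E = (\<Sum>A\<in>{A. indep_set V E A}. monom 1 (card A) * [:1, -1:] ^ (indep_number V E - card A))"

lemma h_poly_eq:
  assumes "finite V"
  shows "h_poly V E = hp V E"
proof -
  let ?I = "{A. indep_set V E A}" and ?a = "indep_number V E"
  have "hilbert_series V E * (1 - fps_X) ^ ?a = (\<Sum>A\<in>?I. Qf A * (1 - fps_X) ^ ?a)"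
    by (simp add: HS_eq[OF assms] sum_distrib_right)
  also have "\<dots> = (\<Sum>A\<in>?I. fps_X ^ card A * (1 - fps_X) ^ (?a - card A))"
  proof (rule sum.cong)
    fix A assume "A \<in> ?I"
    hence le: "card A \<le> ?a" and fin: "finite A"
      using card_le_alpha[OF assms] assms by (auto simp: indep_set_def intro: finite_subset)
    have "Qf A * (1 - fps_X) ^ ?a = (Qf A * (1 - fps_X) ^ card A) * (1 - fps_X) ^ (?a - card A)"
      using le by (simp add: mult.assoc power_add[symmetric])
    thus "Qf A * (1 - fps_X) ^ ?a = fps_X ^ card A * (1 - fps_X) ^ (?a - card A)"
      using Qf_eq[OF fin] by simp
  qed simp
  also have "\<dots> = fps_of_poly (hp V E)"
    by (simp add: hp_def fps_of_poly_sum fps_of_poly_mult fps_of_poly_power fps_of_poly_monom' fps_lin)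
  finally have e: "fps_of_poly (hp V E) = hilbert_series V E * (1 - fps_X) ^ ?a" by simp
  show ?thesis unfolding h_poly_def
    by (rule the_equality) (use e in \<open>auto simp: fps_of_poly_eq_iff[symmetric]\<close>)
qed

lemma lin_pow: "degree ([:1, -1:] ^ k :: int poly) = k \<and> coeff ([:1, -1:] ^ k :: int poly) k = (-1) ^ k"
proof -
  have "degree ([:1, -1:] ^ k :: int poly) = k" by (simp add: degree_power_eq)
  moreover have "lead_coeff ([:1, -1:] ^ k :: int poly) = (-1) ^ k" by (simp add: lead_coeff_power)
  ultimately show ?thesis by simp
qed

lemma hp_props:
  assumes "finite V"
  shows "degree (hp V E) \<le> indep_number V E"
    "coeff (hp V E) (indep_number V E) = (\<Sum>A\<in>{A. indep_set V E A}. (-1) ^ (indep_number V E - card A))"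
proof -
  let ?I = "{A. indep_set V E A}" and ?a = "indep_number V E"
  have le: "A \<in> ?I \<Longrightarrow> card A \<le> ?a" for A using card_le_alpha[OF assms] by auto
  have dg: "degree (monom (1::int) (card A) * [:1, -1:] ^ (?a - card A)) \<le> ?a" if "A \<in> ?I" for A
  proof -
    have "degree (monom (1::int) (card A) * [:1, -1:] ^ (?a - card A)) \<le> card A + (?a - card A)"
      using degree_mult_le[of "monom (1::int) (card A)" "[:1, -1:] ^ (?a - card A)"] lin_pow[of "?a - card A"]
      by (simp add: degree_monom_eq)
    thus ?thesis using le[OF that] by simp
  qed
  show "degree (hp V E) \<le> ?a" unfolding hp_def
    by (rule degree_sum_le) (use indep_finite[OF assms] dg in auto)
  show "coeff (hp V E) ?a = (\<Sum>A\<in>?I. (-1) ^ (?a - card A))"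
    unfolding hp_def coeff_sum
  proof (rule sum.cong)
    fix A assume "A \<in> ?I"
    have "coeff (monom (1::int) (card A) * [:1, -1:] ^ (?a - card A)) ?a = coeff ([:1, -1:] ^ (?a - card A) :: int poly) (?a - card A)"
      using le[OF \<open>A \<in> ?I\<close>] by (simp add: coeff_monom_mult)
    also have "\<dots> = (-1) ^ (?a - card A)" by (rule conjunct2[OF lin_pow])
    finally show "coeff (monom (1::int) (card A) * [:1, -1:] ^ (?a - card A)) ?a = (-1) ^ (?a - card A)" .
  qed simp
qed

lemma pgs_char:
  assumes "finite V"
  shows "pseudo_gorenstein_star V E \<longleftrightarrow>
     (\<Sum>A\<in>{A. indep_set V E A}. (-1) ^ (indep_number V E - card A)) = (1::int)"
proof -
  let ?a = "indep_number V E" and ?c = "coeff (hp V E) (indep_number V E)"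
  note hpp = hp_props[OF assms, of E]
  have "pseudo_gorenstein_star V E \<longleftrightarrow> ?c = 1"
  proof
    assume "pseudo_gorenstein_star V E"
    hence "lead_coeff (hp V E) = 1" "degree (hp V E) = ?a"
      by (auto simp: pseudo_gorenstein_star_def a_invariant_def h_poly_eq[OF assms])
    thus "?c = 1" by simp
  next
    assume c: "?c = 1"
    hence "degree (hp V E) \<ge> ?a" by (intro le_degree) simp
    hence "degree (hp V E) = ?a" using hpp(1) by simp
    thus "pseudo_gorenstein_star V E" using c
      by (simp add: pseudo_gorenstein_star_def a_invariant_def h_poly_eq[OF assms])
  qed
  thus ?thesis using hpp(2) by simp
qed


definition toggle :: "'a \<Rightarrow> 'a set \<Rightarrow> 'a set" where
  "toggle x A = (if x \<in> A then A - {x} else insert x A)"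

lemma toggle_toggle[simp]: "toggle x (toggle x A) = A"
  by (auto simp: toggle_def)

lemma toggle_mem: "y \<noteq> x \<Longrightarrow> y \<in> toggle x A \<longleftrightarrow> y \<in> A"
  by (auto simp: toggle_def)

lemma toggle_parity:
  assumes "finite A" shows "(-1::int) ^ card (toggle x A) = - ((-1) ^ card A)"
proof (cases "x \<in> A")
  case True
  have t: "toggle x A = A - {x}" using True by (simp add: toggle_def)
  have c: "card A = Suc (card (A - {x}))" by (rule card_Suc_Diff1[OF assms True, symmetric])
  show ?thesis unfolding t c by simp
next
  case False
  then have "card (toggle x A) = Suc (card A)" using assms by (simp add: toggle_def)
  then show ?thesis by simp
qed

lemma involution_sum:
  fixes h :: "'b \<Rightarrow> int"
  assumes fin: "finite S" and A0: "A0 \<in> S"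
    and phi: "\<And>A. A \<in> S - {A0} \<Longrightarrow> phi A \<in> S - {A0} \<and> phi (phi A) = A \<and> h (phi A) = - h A"
  shows "sum h S = h A0"
proof -
  let ?S = "S - {A0}"
  have "sum (\<lambda>A. - h A) ?S = sum h ?S"
    by (rule sum.reindex_bij_witness[where i = phi and j = phi]) (use phi in auto)
  hence "sum h ?S = 0" by (simp add: sum_negf)
  moreover have "sum h S = h A0 + sum h ?S" using fin A0 by (simp add: sum.remove)
  ultimately show ?thesis by simp
qed

lemma indepD: "indep_set V E A \<Longrightarrow> {a, b} \<in> E \<Longrightarrow> a \<in> A \<Longrightarrow> b \<in> A \<Longrightarrow> False"
  by (auto simp: indep_set_def)

fun gmap :: "(nat \<Rightarrow> nat) \<Rightarrow> vert \<Rightarrow> vert" where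
  "gmap t (Xv i) = Lf i 0"
| "gmap t (Yv j) = (if t j = 0 then Yv j else TV j 0)"
| "gmap t (Lf i k) = Lf i k"
| "gmap t (TU j k) = TV j k"
| "gmap t (TV j k) = TV j k"

lemma conn_Bn:
  assumes n: "n \<ge> 1" and c: "connected_graph (base_verts n m) (base_edges n m B)"
  shows "\<forall>j<m. \<exists>i<n. B i j"
proof (intro allI impI)
  fix j assume j: "j < m"
  have "Yv j \<in> base_verts n m" "Xv 0 \<in> base_verts n m" using j n by (auto simp: base_verts_def)
  hence r: "(\<lambda>x y. {x, y} \<in> base_edges n m B)\<^sup>*\<^sup>* (Yv j) (Xv 0)"
    using c unfolding connected_graph_def by blast
  obtain z where "{Yv j, z} \<in> base_edges n m B"
    by (rule converse_rtranclpE[OF r]) auto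
  then obtain i j' where "i < n" "j' < m" "B i j'" "{Yv j, z} = {Xv i, Yv j'}"
    unfolding base_edges_def by blast
  hence "i < n \<and> B i j" by (auto simp: doubleton_eq_iff)
  thus "\<exists>i<n. B i j" by blast
qed

locale Gctx =
  fixes n m :: nat and B :: "nat \<Rightarrow> nat \<Rightarrow> bool" and f t :: "nat \<Rightarrow> nat"
  assumes f1: "\<forall>i<n. f i \<ge> 1" and Bn: "\<forall>j<m. \<exists>i<n. B i j"
begin

abbreviation "V \<equiv> G_verts n m f t"
abbreviation "E \<equiv> G_edges n m B f t"

lemma V_simps[simp]:
  "Xv i \<in> V \<longleftrightarrow> i < n" "Yv j \<in> V \<longleftrightarrow> j < m" "Lf i k \<in> V \<longleftrightarrow> i < n \<and> k < f i"
  "TU j k \<in> V \<longleftrightarrow> j < m \<and> k < t j" "TV j k \<in> V \<longleftrightarrow> j < m \<and> k < t j"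
  by (auto simp: G_verts_def base_verts_def)

lemma E_cases:
  assumes "e \<in> E"
  shows "(\<exists>i j. i < n \<and> j < m \<and> B i j \<and> e = {Xv i, Yv j}) \<or>
         (\<exists>i k. i < n \<and> k < f i \<and> e = {Xv i, Lf i k}) \<or>
         (\<exists>j k. j < m \<and> k < t j \<and> e = {Yv j, TU j k}) \<or>
         (\<exists>j k. j < m \<and> k < t j \<and> e = {Yv j, TV j k}) \<or>
         (\<exists>j k. j < m \<and> k < t j \<and> e = {TU j k, TV j k})"
  using assms unfolding G_edges_def base_edges_def Un_iff mem_Collect_eq by blast

lemma E_intros:
  "i < n \<Longrightarrow> j < m \<Longrightarrow> B i j \<Longrightarrow> {Xv i, Yv j} \<in> E"
  "i < n \<Longrightarrow> k < f i \<Longrightarrow> {Xv i, Lf i k} \<in> E"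
  "j < m \<Longrightarrow> k < t j \<Longrightarrow> {Yv j, TU j k} \<in> E"
  "j < m \<Longrightarrow> k < t j \<Longrightarrow> {Yv j, TV j k} \<in> E"
  "j < m \<Longrightarrow> k < t j \<Longrightarrow> {TU j k, TV j k} \<in> E"
  unfolding G_edges_def base_edges_def Un_iff mem_Collect_eq by blast+

lemma finite_V: "finite V"
proof -
  have "{Lf i k | i k. i < n \<and> k < f i} = (\<lambda>(i,k). Lf i k) ` Sigma {..<n} (\<lambda>i. {..<f i})" by auto
  moreover have "{TU j k | j k. j < m \<and> k < t j} = (\<lambda>(j,k). TU j k) ` Sigma {..<m} (\<lambda>j. {..<t j})" by auto
  moreover have "{TV j k | j k. j < m \<and> k < t j} = (\<lambda>(j,k). TV j k) ` Sigma {..<m} (\<lambda>j. {..<t j})" by auto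
  ultimately show ?thesis by (simp add: G_verts_def base_verts_def)
qed

lemma E_pair: "e \<in> E \<Longrightarrow> \<exists>a b. a \<noteq> b \<and> e = {a, b}"
  by (drule E_cases) auto

lemma nbr_Lf: "{Lf i k, y} \<in> E \<Longrightarrow> y = Xv i"
  by (drule E_cases) (auto simp: doubleton_eq_iff)

lemma nbr_TU: "{TU j k, y} \<in> E \<Longrightarrow> y = Yv j \<or> y = TV j k"
  by (drule E_cases) (auto simp: doubleton_eq_iff)

abbreviation "I \<equiv> {A. indep_set V E A}"

lemma finite_I: "finite I" using indep_finite[OF finite_V] .

lemma indep_finite_set: "indep_set V E A \<Longrightarrow> finite A"
  using finite_V by (auto simp: indep_set_def intro: finite_subset)

lemma indep_toggle:
  assumes A: "indep_set V E A" and x: "x \<in> V" and nb: "\<And>y. {x, y} \<in> E \<Longrightarrow> y \<notin> A"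
  shows "indep_set V E (toggle x A)"
proof (cases "x \<in> A")
  case True
  thus ?thesis using A by (auto simp: toggle_def indep_set_def)
next
  case False
  have "\<not> e \<subseteq> insert x A" if e: "e \<in> E" for e
  proof
    assume sub: "e \<subseteq> insert x A"
    obtain a b where ab: "a \<noteq> b" "e = {a, b}" using E_pair[OF e] by blast
    show False
    proof (cases "x \<in> e")
      case False
      hence "e \<subseteq> A" using sub by auto
      thus False using A e by (auto simp: indep_set_def)
    next
      case True
      then obtain y where y: "e = {x, y}" "y \<noteq> x" using ab by auto
      hence "y \<in> A" using sub by auto
      thus False using nb[of y] e y by simp
    qed
  qed
  thus ?thesis using False A x by (auto simp: toggle_def indep_set_def)
qed

lemma Yv_notin: "indep_set V E A \<Longrightarrow> \<forall>i<n. Xv i \<in> A \<Longrightarrow> Yv j \<notin> A"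
proof
  assume A: "indep_set V E A" and X: "\<forall>i<n. Xv i \<in> A" and Y: "Yv j \<in> A"
  hence "j < m" by (auto simp: indep_set_def)
  then obtain i where "i < n" "B i j" using Bn by blast
  thus False using indepD[OF A E_intros(1)[OF \<open>i < n\<close> \<open>j < m\<close> \<open>B i j\<close>]] X Y by blast
qed

definition "TVs = {TV j k | j k. j < m \<and> k < t j}"
definition "A0 = Xv ` {..<n} \<union> TVs"

lemma TVs_eq: "TVs = (\<lambda>(j,k). TV j k) ` Sigma {..<m} (\<lambda>j. {..<t j})"
  unfolding TVs_def by auto

lemma card_TVs: "card TVs = (\<Sum>j<m. t j)"
proof -
  have "inj_on (\<lambda>(j,k). TV j k) (Sigma {..<m} (\<lambda>j. {..<t j}))" by (auto simp: inj_on_def)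
  hence "card TVs = card (Sigma {..<m} (\<lambda>j. {..<t j}))" unfolding TVs_eq by (rule card_image)
  thus ?thesis by (simp add: card_SigmaI)
qed

lemma finite_TVs: "finite TVs" unfolding TVs_eq by auto

lemma A0_indep: "indep_set V E A0"
proof -
  have "A0 \<subseteq> V" by (auto simp: A0_def TVs_def)
  moreover have "\<not> e \<subseteq> A0" if "e \<in> E" for e
    using E_cases[OF that] by (auto simp: A0_def TVs_def)
  ultimately show ?thesis by (auto simp: indep_set_def)
qed

lemma card_A0: "card A0 = n + (\<Sum>j<m. t j)"
proof -
  have "Xv ` {..<n} \<inter> TVs = {}" by (auto simp: TVs_def)
  hence "card A0 = card (Xv ` {..<n}) + card TVs"
    unfolding A0_def by (rule card_Un_disjoint[rotated 2]) (auto simp: finite_TVs)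
  moreover have "card (Xv ` {..<n}) = n" by (simp add: card_image inj_on_def)
  ultimately show ?thesis by (simp add: card_TVs)
qed

definition "PX A = (\<lambda>i. i < n \<and> Xv i \<notin> A)"
definition "PT A = (\<lambda>p. fst p < m \<and> snd p < t (fst p) \<and> TV (fst p) (snd p) \<notin> A)"

definition phi :: "vert set \<Rightarrow> vert set" where
  "phi A = (if \<exists>i. PX A i then toggle (Lf (SOME i. PX A i) 0) A
            else if \<exists>p. PT A p then toggle (TU (fst (SOME p. PT A p)) (snd (SOME p. PT A p))) A
            else A)"

lemma phi_prop:
  assumes A: "A \<in> I - {A0}"
  shows "phi A \<in> I - {A0} \<and> phi (phi A) = A \<and> (-1::int) ^ card (phi A) = - ((-1) ^ card A)"
proof -
  have Ai: "indep_set V E A" and AA0: "A \<noteq> A0" using A by auto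
  have finA: "finite A" using indep_finite_set[OF Ai] .
  show ?thesis
  proof (cases "\<exists>i. PX A i")
    case True
    define i0 where "i0 = (SOME i. PX A i)"
    have i0: "i0 < n" "Xv i0 \<notin> A" using someI_ex[OF True] unfolding i0_def PX_def by auto
    define A' where "A' = toggle (Lf i0 0) A"
    have ph: "phi A = A'" using True by (simp add: phi_def A'_def i0_def)
    have "PX A' = PX A" unfolding A'_def PX_def by (auto simp: toggle_mem)
    hence ph2: "phi A' = A" using True by (simp add: phi_def A'_def i0_def)
    have "indep_set V E A'" unfolding A'_def
    proof (rule indep_toggle[OF Ai])
      show "Lf i0 0 \<in> V" using i0 f1 by auto
      show "\<And>y. {Lf i0 0, y} \<in> E \<Longrightarrow> y \<notin> A" using nbr_Lf i0 by blast
    qed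
    moreover have "A' \<noteq> A0"
    proof
      assume "A' = A0"
      hence "Xv i0 \<in> A'" using i0 by (auto simp: A0_def)
      thus False using i0 by (simp add: A'_def toggle_mem)
    qed
    ultimately show ?thesis using ph ph2 toggle_parity[OF finA] A'_def by simp
  next
    case False
    hence allX: "\<forall>i<n. Xv i \<in> A" by (auto simp: PX_def)
    show ?thesis
    proof (cases "\<exists>p. PT A p")
      case True
      define p0 where "p0 = (SOME p. PT A p)"
      have p0: "fst p0 < m" "snd p0 < t (fst p0)" "TV (fst p0) (snd p0) \<notin> A"
        using someI_ex[OF True] unfolding p0_def PT_def by auto
      define A' where "A' = toggle (TU (fst p0) (snd p0)) A"
      have ph: "phi A = A'" using True False by (simp add: phi_def A'_def p0_def)
      have e1: "PX A' = PX A" unfolding A'_def PX_def by (auto simp: toggle_mem)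
      have e2: "PT A' = PT A" unfolding A'_def PT_def by (auto simp: toggle_mem)
      have ph2: "phi A' = A" using True False e1 e2 by (simp add: phi_def A'_def p0_def)
      have "indep_set V E A'" unfolding A'_def
      proof (rule indep_toggle[OF Ai])
        show "TU (fst p0) (snd p0) \<in> V" using p0 by auto
        show "\<And>y. {TU (fst p0) (snd p0), y} \<in> E \<Longrightarrow> y \<notin> A"
          using nbr_TU p0 Yv_notin[OF Ai allX] by blast
      qed
      moreover have "A' \<noteq> A0"
      proof
        assume "A' = A0"
        hence "TV (fst p0) (snd p0) \<in> A'" using p0 by (auto simp: A0_def TVs_def)
        thus False using p0 by (simp add: A'_def toggle_mem)
      qed
      ultimately show ?thesis using ph ph2 toggle_parity[OF finA] A'_def by simp
    next
      case noT: False
      hence allT: "\<And>j k. j < m \<Longrightarrow> k < t j \<Longrightarrow> TV j k \<in> A" by (auto simp: PT_def)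
      have AV: "A \<subseteq> V" using Ai by (simp add: indep_set_def)
      have "A \<subseteq> A0"
      proof
        fix x assume x: "x \<in> A"
        show "x \<in> A0"
        proof (cases x)
          case (Xv i) thus ?thesis using x AV by (auto simp: A0_def)
        next
          case (Yv j) thus ?thesis using x Yv_notin[OF Ai allX] by auto
        next
          case (Lf i k)
          hence "i < n" "k < f i" using x AV by auto
          thus ?thesis using indepD[OF Ai E_intros(2)[OF \<open>i < n\<close> \<open>k < f i\<close>]] allX x Lf by auto
        next
          case (TU j k)
          hence "j < m" "k < t j" using x AV by auto
          thus ?thesis using indepD[OF Ai E_intros(5)[OF \<open>j < m\<close> \<open>k < t j\<close>]] allT x TU by auto
        next
          case (TV j k) thus ?thesis using x AV by (auto simp: A0_def TVs_def)
        qed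
      qed
      moreover have "A0 \<subseteq> A" using allX allT by (auto simp: A0_def TVs_def)
      ultimately show ?thesis using AA0 by auto
    qed
  qed
qed

lemma altsum: "(\<Sum>A\<in>I. (-1::int) ^ card A) = (-1) ^ (n + (\<Sum>j<m. t j))"
proof -
  have "(\<Sum>A\<in>I. (-1::int) ^ card A) = (-1) ^ card A0"
    by (rule involution_sum[OF finite_I, where phi = phi]) (use A0_indep phi_prop in auto)
  thus ?thesis by (simp add: card_A0)
qed

definition "Ls = {Lf i k | i k. i < n \<and> k < f i}"
definition "Y0 = Yv ` {j. j < m \<and> t j = 0}"
definition "M = Ls \<union> Y0 \<union> TVs"

lemma Ls_eq: "Ls = (\<lambda>(i,k). Lf i k) ` Sigma {..<n} (\<lambda>i. {..<f i})"
  unfolding Ls_def by auto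

lemma card_Ls: "card Ls = (\<Sum>i<n. f i)"
proof -
  have "inj_on (\<lambda>(i,k). Lf i k) (Sigma {..<n} (\<lambda>i. {..<f i}))" by (auto simp: inj_on_def)
  hence "card Ls = card (Sigma {..<n} (\<lambda>i. {..<f i}))" unfolding Ls_eq by (rule card_image)
  thus ?thesis by (simp add: card_SigmaI)
qed

lemma card_Y0: "card Y0 = card {j. j < m \<and> t j = 0}"
  unfolding Y0_def by (rule card_image) (simp add: inj_on_def)

lemma finite_M: "finite M"
  unfolding M_def Ls_eq Y0_def using finite_TVs by auto

lemma card_M: "card M = (\<Sum>i<n. f i) + card {j. j < m \<and> t j = 0} + (\<Sum>j<m. t j)"
proof -
  have f: "finite Ls" "finite Y0" "finite TVs" unfolding Ls_eq Y0_def using finite_TVs by auto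
  have d1: "Ls \<inter> Y0 = {}" by (auto simp: Ls_def Y0_def)
  have d2: "(Ls \<union> Y0) \<inter> TVs = {}" by (auto simp: Ls_def Y0_def TVs_def)
  have "card M = card (Ls \<union> Y0) + card TVs"
    unfolding M_def using f d2 by (intro card_Un_disjoint) auto
  also have "card (Ls \<union> Y0) = card Ls + card Y0" using f d1 by (intro card_Un_disjoint) auto
  finally show ?thesis by (simp add: card_Ls card_Y0 card_TVs)
qed

lemma M_indep: "indep_set V E M"
proof -
  have "M \<subseteq> V" by (auto simp: M_def Ls_def Y0_def TVs_def)
  moreover have "\<not> e \<subseteq> M" if "e \<in> E" for e
    using E_cases[OF that] by (auto simp: M_def Ls_def Y0_def TVs_def)
  ultimately show ?thesis by (auto simp: indep_set_def)
qed

lemma indep_le_M: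
  assumes A: "indep_set V E A"
  shows "card A \<le> card M"
proof -
  have AV: "A \<subseteq> V" using A by (simp add: indep_set_def)
  have c1: "Xv i \<in> A \<Longrightarrow> Lf i 0 \<in> A \<Longrightarrow> False" for i
  proof -
    assume a: "Xv i \<in> A" "Lf i 0 \<in> A"
    hence "i < n" "0 < f i" using AV by auto
    thus False using indepD[OF A E_intros(2)] a by blast
  qed
  have c2: "Yv j \<in> A \<Longrightarrow> TU j 0 \<in> A \<Longrightarrow> False" for j
  proof -
    assume a: "Yv j \<in> A" "TU j 0 \<in> A"
    hence "j < m" "0 < t j" using AV by auto
    thus False using indepD[OF A E_intros(3)] a by blast
  qed
  have c3: "Yv j \<in> A \<Longrightarrow> TV j 0 \<in> A \<Longrightarrow> False" for j
  proof -
    assume a: "Yv j \<in> A" "TV j 0 \<in> A"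
    hence "j < m" "0 < t j" using AV by auto
    thus False using indepD[OF A E_intros(4)] a by blast
  qed
  have c4: "TU j k \<in> A \<Longrightarrow> TV j k \<in> A \<Longrightarrow> False" for j k
  proof -
    assume a: "TU j k \<in> A" "TV j k \<in> A"
    hence "j < m" "k < t j" using AV by auto
    thus False using indepD[OF A E_intros(5)] a by blast
  qed
  have inj: "inj_on (gmap t) A"
  proof (rule inj_onI)
    fix x y assume xy: "x \<in> A" "y \<in> A" "gmap t x = gmap t y"
    show "x = y"
      using xy c1 c2 c3 c4 by (cases x; cases y) (auto split: if_splits)
  qed
  have into: "gmap t ` A \<subseteq> M"
  proof
    fix z assume "z \<in> gmap t ` A"
    then obtain x where x: "x \<in> A" "z = gmap t x" by auto
    have xV: "x \<in> V" using x AV by auto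
    show "z \<in> M"
    proof (cases x)
      case (Xv i) thus ?thesis using x xV f1 by (auto simp: M_def Ls_def)
    next
      case (Yv j) thus ?thesis using x xV by (auto simp: M_def Y0_def TVs_def)
    next
      case (Lf i k) thus ?thesis using x xV by (auto simp: M_def Ls_def)
    next
      case (TU j k) thus ?thesis using x xV by (auto simp: M_def TVs_def)
    next
      case (TV j k) thus ?thesis using x xV by (auto simp: M_def TVs_def)
    qed
  qed
  show ?thesis by (rule card_inj_on_le[OF inj into finite_M])
qed

lemma alpha_eq: "indep_number V E = card M"
  unfolding indep_number_def
proof (rule Max_eqI)
  show "finite (card ` I)" using finite_I by simp
  show "\<And>y. y \<in> card ` I \<Longrightarrow> y \<le> card M" using indep_le_M by auto
  show "card M \<in> card ` I" using M_indep by auto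
qed

end

lemma sgn_diff: "c \<le> a \<Longrightarrow> (-1::int) ^ (a - c) = (-1) ^ a * (-1) ^ c"
  by (auto simp: minus_one_power_iff)

theorem corollary4p4:
  fixes n m :: nat and B :: "nat \<Rightarrow> nat \<Rightarrow> bool" and f t :: "nat \<Rightarrow> nat"
  assumes "n \<ge> 1" and "m \<ge> 1"
    and "connected_graph (base_verts n m) (base_edges n m B)"
    and "\<forall>i<n. f i \<ge> 1"
  shows "pseudo_gorenstein_star (G_verts n m f t) (G_edges n m B f t) \<longleftrightarrow>
         even (n + (\<Sum>i<n. f i) + card {j. j < m \<and> t j = 0})"
proof -
  interpret Gctx n m B f t
    using assms(4) conn_Bn[OF assms(1,3)] by unfold_locales auto
  let ?a = "indep_number V E" and ?T = "\<Sum>j<m. t j"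
  have "(\<Sum>A\<in>I. (-1::int) ^ (?a - card A)) = (\<Sum>A\<in>I. (-1) ^ ?a * (-1) ^ card A)"
    by (rule sum.cong) (auto intro: sgn_diff card_le_alpha[OF finite_V])
  also have "\<dots> = (-1) ^ ?a * (-1) ^ (n + ?T)" by (simp add: sum_distrib_left[symmetric] altsum)
  also have "\<dots> = (-1) ^ (?a + n + ?T)" by (simp add: power_add)
  finally have "pseudo_gorenstein_star V E \<longleftrightarrow> (-1::int) ^ (?a + n + ?T) = 1"
    using pgs_char[OF finite_V] by simp
  also have "\<dots> \<longleftrightarrow> even (?a + n + ?T)" by (simp add: minus_one_power_iff)
  also have "\<dots> \<longleftrightarrow> even (n + (\<Sum>i<n. f i) + card {j. j < m \<and> t j = 0})"
    unfolding alpha_eq card_M by presburger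
  finally show ?thesis .
qed

end
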